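(* Let $K$ be a field of characteristic $0$, let $L=\mathcal{L}(x,y)$ be the free Lie algebra over $K$ freely generated by $x,y$, and let $\delta$ be the derivation of $L$ with $\delta(x)=0$, $\delta(y)=x$. If $g\in L$ satisfies $[g,x]+[\delta(g),y]=0$ and $g\notin \operatorname{span}_K\{x\}$, then $g=\alpha y+\beta x$ for some $\alpha,\beta\in K$ with $\alpha\neq 0$. *)

theory Defs
  imports Main
begin

text \<open>Free associative algebra K<x,y> on two generators: an element is a
coefficient function on words over the alphabet {x,y}, encoded as bool lists
(False = x, True = y). Elements of the free Lie algebra L(x,y) are realised as
the Lie subalgebra generated by x and y inside K<x,y> (the standard model of
the free Lie algebra). Such elements automatically have finite support.\<close>

type_synonym 'k ncpoly = "bool list \<Rightarrow> 'k"

definition nc_add :: "'k::field ncpoly \<Rightarrow> 'k ncpoly \<Rightarrow> 'k ncpoly" where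
  "nc_add p q = (\<lambda>w. p w + q w)"

definition nc_smult :: "'k::field \<Rightarrow> 'k ncpoly \<Rightarrow> 'k ncpoly" where
  "nc_smult c p = (\<lambda>w. c * p w)"

definition nc_zero :: "'k::field ncpoly" where
  "nc_zero = (\<lambda>w. 0)"

definition nc_mult :: "'k::field ncpoly \<Rightarrow> 'k ncpoly \<Rightarrow> 'k ncpoly" where
  "nc_mult p q = (\<lambda>w. \<Sum>i\<le>length w. p (take i w) * q (drop i w))"

definition lie_bracket :: "'k::field ncpoly \<Rightarrow> 'k ncpoly \<Rightarrow> 'k ncpoly" where
  "lie_bracket p q = (\<lambda>w. nc_mult p q w - nc_mult q p w)"

definition gen_x :: "'k::field ncpoly" where
  "gen_x = (\<lambda>w. if w = [False] then 1 else 0)"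

definition gen_y :: "'k::field ncpoly" where
  "gen_y = (\<lambda>w. if w = [True] then 1 else 0)"

inductive_set free_lie :: "'k::field ncpoly set" where
  gx: "gen_x \<in> free_lie"
| gy: "gen_y \<in> free_lie"
| add: "a \<in> free_lie \<Longrightarrow> b \<in> free_lie \<Longrightarrow> nc_add a b \<in> free_lie"
| smult: "a \<in> free_lie \<Longrightarrow> nc_smult c a \<in> free_lie"
| brk: "a \<in> free_lie \<Longrightarrow> b \<in> free_lie \<Longrightarrow> lie_bracket a b \<in> free_lie"

definition lie_derivation :: "('k::field ncpoly \<Rightarrow> 'k ncpoly) \<Rightarrow> bool" where
  "lie_derivation d \<longleftrightarrow>
     (\<forall>a\<in>free_lie. d a \<in> free_lie) \<and>
     (\<forall>a\<in>free_lie. \<forall>b\<in>free_lie. d (nc_add a b) = nc_add (d a) (d b)) \<and>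
     (\<forall>a\<in>free_lie. \<forall>c. d (nc_smult c a) = nc_smult c (d a)) \<and>
     (\<forall>a\<in>free_lie. \<forall>b\<in>free_lie.
        d (lie_bracket a b) = nc_add (lie_bracket (d a) b) (lie_bracket a (d b)))"

end

theory Submission
  imports Defs
begin

definition Dc :: "'k::field ncpoly \<Rightarrow> 'k ncpoly" where
  "Dc p = (\<lambda>w. \<Sum>i<length w. if w!i then 0 else p (w[i:=True]))"

definition sh :: "bool \<Rightarrow> 'k::field ncpoly \<Rightarrow> 'k ncpoly" where
  "sh c p = (\<lambda>v. p (c#v))"

lemma Dc_Nil[simp]: "Dc p [] = 0"
  by (simp add: Dc_def)

lemma upd_Cons_Suc: "(c#w)[Suc i := x] = c # w[i:=x]"
  by simp

lemma if0_add: "(if b then 0 else (A::'a::comm_monoid_add) + B) = (if b then 0 else A) + (if b then 0 else B)"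
  by simp

lemma Dc_Cons: "Dc p (c#w) = (if c then 0 else p (True#w)) + Dc (sh c p) w"
  unfolding Dc_def sh_def length_Cons sum.lessThan_Suc_shift
  by (simp only: upd_Cons_Suc nth_Cons_Suc nth_Cons_0) simp

lemma Dc_snoc: "Dc p (w@[c]) = Dc (\<lambda>u. p (u@[c])) w + (if c then 0 else p (w@[True]))"
  unfolding Dc_def length_append_singleton sum.lessThan_Suc
  by (auto intro!: sum.cong simp: nth_append list_update_append)

lemma mult_Cons: "nc_mult p q (c#w) = p [] * q (c#w) + nc_mult (sh c p) q w"
  unfolding nc_mult_def sh_def length_Cons sum.atMost_Suc_shift
  by simp

lemma mult_Nil[simp]: "nc_mult p q [] = p [] * q []"
  unfolding nc_mult_def by simp

lemma mult_add_left: "nc_mult (\<lambda>w. p w + r w) q = (\<lambda>w. nc_mult p q w + nc_mult r q w)"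
  unfolding nc_mult_def by (simp add: distrib_right sum.distrib)

lemma mult_add_right: "nc_mult p (\<lambda>w. q w + r w) = (\<lambda>w. nc_mult p q w + nc_mult p r w)"
  unfolding nc_mult_def by (simp add: distrib_left sum.distrib)

lemma mult_smult_left: "nc_mult (\<lambda>w. c * p w) q = (\<lambda>w. c * nc_mult p q w)"
  unfolding nc_mult_def by (simp add: sum_distrib_left mult.assoc)

lemma sh_Dc: "sh c (Dc p) = (\<lambda>w. (if c then 0 else p (True#w)) + Dc (sh c p) w)"
  unfolding sh_def by (rule ext) (simp add: Dc_Cons[unfolded sh_def])

lemma Dc_mult: "Dc (nc_mult p q) w = nc_mult (Dc p) q w + nc_mult p (Dc q) w"
proof (induction w arbitrary: p q)
  case Nil
  then show ?case by simp
next
  case (Cons c w)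
  have shm: "sh c (nc_mult p q) = (\<lambda>v. p [] * q (c#v) + nc_mult (sh c p) q v)"
    by (rule ext) (simp add: sh_def mult_Cons[unfolded sh_def])
  have "Dc (nc_mult p q) (c#w) = (if c then 0 else nc_mult p q (True#w)) + Dc (sh c (nc_mult p q)) w"
    by (rule Dc_Cons)
  also have "Dc (sh c (nc_mult p q)) w = p [] * Dc (sh c q) w + Dc (nc_mult (sh c p) q) w"
    unfolding shm unfolding Dc_def sh_def
    by (simp only: if0_add sum.distrib) (simp add: sum_distrib_left if_distrib cong: if_cong)
  also have "Dc (nc_mult (sh c p) q) w = nc_mult (Dc (sh c p)) q w + nc_mult (sh c p) (Dc q) w"
    by (rule Cons.IH)
  finally have L: "Dc (nc_mult p q) (c#w) = (if c then 0 else nc_mult p q (True#w)) +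
      (p [] * Dc (sh c q) w + (nc_mult (Dc (sh c p)) q w + nc_mult (sh c p) (Dc q) w))" .
  have R1: "nc_mult (Dc p) q (c#w) = (if c then 0 else nc_mult (sh True p) q w) + nc_mult (Dc (sh c p)) q w"
  proof -
    have "nc_mult (Dc p) q (c#w) = nc_mult (sh c (Dc p)) q w"
      by (simp add: mult_Cons)
    also have "sh c (Dc p) = (\<lambda>w. (if c then 0 else sh True p w) + Dc (sh c p) w)"
      unfolding sh_Dc by (rule ext) (simp add: sh_def)
    also have "nc_mult \<dots> q w = (if c then 0 else nc_mult (sh True p) q w) + nc_mult (Dc (sh c p)) q w"
      by (cases c) (simp_all add: mult_add_left nc_mult_def)
    finally show ?thesis .
  qed
  have R2: "nc_mult p (Dc q) (c#w) = p [] * ((if c then 0 else q (True#w)) + Dc (sh c q) w) + nc_mult (sh c p) (Dc q) w"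
    by (simp add: mult_Cons Dc_Cons)
  have R3: "nc_mult p q (True#w) = p [] * q (True#w) + nc_mult (sh True p) q w"
    by (rule mult_Cons)
  show ?case unfolding L R1 R2 R3 by (cases c) (simp_all add: algebra_simps)
qed

lemma upd_ne1: "i < length w \<Longrightarrow> w[i:=b] \<noteq> [\<not>b]"
proof
  assume i: "i < length w" and e: "w[i:=b] = [\<not>b]"
  have "w[i:=b] ! i = b" using i by simp
  moreover have "length w = 1" using arg_cong[OF e, of length] by simp
  then have "i = 0" using i by simp
  ultimately show False using e by simp
qed

lemma upd_len2: "2 \<le> length w \<Longrightarrow> w[i:=b] \<noteq> [d]"
proof
  assume "2 \<le> length w" "w[i:=b] = [d]"
  then have "length (w[i:=b]) = 1" by simp
  then show False using \<open>2 \<le> length w\<close> by simp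
qed

lemma Dc_gen_x: "Dc gen_x = (nc_zero :: 'k::field ncpoly)"
proof (rule ext)
  fix w :: "bool list"
  have "(if w!i then 0 else gen_x (w[i:=True])) = (0::'k)" if "i < length w" for i
    using upd_ne1[OF that, of True] unfolding gen_x_def by simp
  then show "Dc gen_x w = (nc_zero :: 'k ncpoly) w"
    unfolding Dc_def nc_zero_def by (intro sum.neutral ballI) simp
qed

lemma Dc_gen_y: "Dc gen_y = (gen_x :: 'k::field ncpoly)"
proof (rule ext)
  fix w :: "bool list"
  show "Dc gen_y w = (gen_x :: 'k ncpoly) w"
  proof (cases "length w \<ge> 2")
    case True
    have "(if w!i then 0 else gen_y (w[i:=True])) = (0::'k)" for i
      using upd_len2[OF True, of i True True] unfolding gen_y_def by simp
    then have "Dc gen_y w = (0::'k)"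
      unfolding Dc_def by (intro sum.neutral ballI) simp
    moreover have "w \<noteq> [False]" using True by auto
    ultimately show ?thesis by (simp add: gen_x_def)
  next
    case False
    then have "w = [] \<or> (\<exists>c. w = [c])"
      by (cases w) (auto simp: Suc_le_eq)
    then show ?thesis
      by (auto simp: Dc_def gen_x_def gen_y_def)
  qed
qed

lemma Dc_add: "Dc (nc_add a b) = nc_add (Dc a) (Dc b)"
  unfolding Dc_def nc_add_def by (rule ext) (simp add: if0_add sum.distrib)

lemma Dc_smult: "Dc (nc_smult c a) = nc_smult c (Dc a)"
  unfolding Dc_def nc_smult_def by (rule ext) (simp add: sum_distrib_left if_distrib cong: if_cong)

lemma Dc_diff: "Dc (\<lambda>w. a w - b w) = (\<lambda>w. Dc a w - Dc b w)"
proof -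
  have ifd: "\<And>b' (A::'z::ab_group_add) B. (if b' then 0 else A - B) = (if b' then 0 else A) - (if b' then 0 else B)"
    by simp
  show ?thesis unfolding Dc_def by (intro ext) (simp only: ifd sum_subtractf)
qed

lemma Dc_bracket: "Dc (lie_bracket a b) = nc_add (lie_bracket (Dc a) b) (lie_bracket a (Dc b))"
  unfolding lie_bracket_def Dc_diff nc_add_def
  by (rule ext) (simp add: Dc_mult)

lemma delta_eq:
  assumes d: "lie_derivation \<delta>" and dx: "\<delta> gen_x = nc_zero" and dy: "\<delta> gen_y = gen_x"
    and a: "a \<in> free_lie"
  shows "\<delta> a = Dc a"
  using a
proof (induction rule: free_lie.induct)
  case gx
  then show ?case by (simp only: dx Dc_gen_x)
next
  case gy
  then show ?case by (simp only: dy Dc_gen_y)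
next
  case (add a b)
  then show ?case using d unfolding lie_derivation_def by (simp add: Dc_add)
next
  case (smult a c)
  then show ?case using d unfolding lie_derivation_def by (simp add: Dc_smult)
next
  case (brk a b)
  then show ?case using d unfolding lie_derivation_def by (simp add: Dc_bracket)
qed

lemma mult_rep_comm: "nc_mult a b (replicate n c) = nc_mult b a (replicate n c)"
proof -
  let ?f = "\<lambda>i. a (replicate i c) * b (replicate (n - i) c)"
  have "nc_mult a b (replicate n c) = (\<Sum>i\<in>{0..n}. ?f i)"
    unfolding nc_mult_def by (intro sum.cong) (auto simp: min_def)
  also have "\<dots> = (\<Sum>i\<in>{0..n}. ?f (n + 0 - i))"
    by (rule sum.atLeastAtMost_rev)
  also have "\<dots> = (\<Sum>i\<in>{0..n}. b (replicate i c) * a (replicate (n - i) c))"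
    by (intro sum.cong refl) (simp add: mult.commute)
  also have "\<dots> = nc_mult b a (replicate n c)"
    unfolding nc_mult_def by (intro sum.cong) (auto simp: min_def)
  finally show ?thesis .
qed

lemma lie_rep:
  assumes "p \<in> free_lie" "n \<noteq> 1"
  shows "p (replicate n c) = 0"
  using assms
proof (induction rule: free_lie.induct)
  case gx
  then show ?case by (auto simp: gen_x_def dest: arg_cong[where f=length])
next
  case gy
  then show ?case by (auto simp: gen_y_def dest: arg_cong[where f=length])
next
  case (add a b)
  then show ?case by (simp add: nc_add_def)
next
  case (smult a d)
  then show ?case by (simp add: nc_smult_def)
next
  case (brk a b)
  show ?case using mult_rep_comm[of a b n c] by (simp add: lie_bracket_def)
qed

lemma mult_right1:
  assumes "\<And>u. length u \<noteq> 1 \<Longrightarrow> q u = 0"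
  shows "nc_mult p q (w@[d]) = p w * q [d]"
proof -
  let ?f = "\<lambda>i. p (take i (w@[d])) * q (drop i (w@[d]))"
  have "nc_mult p q (w@[d]) = sum ?f {..Suc (length w)}"
    unfolding nc_mult_def by simp
  also have "\<dots> = ?f (length w) + sum ?f ({..Suc (length w)} - {length w})"
    by (rule sum.remove) auto
  also have "sum ?f ({..Suc (length w)} - {length w}) = 0"
  proof (intro sum.neutral ballI)
    fix i assume "i \<in> {..Suc (length w)} - {length w}"
    then have "length (drop i (w@[d])) \<noteq> 1" by auto
    then show "?f i = 0" using assms by simp
  qed
  finally show ?thesis by simp
qed

lemma mult_left1:
  assumes "\<And>u. length u \<noteq> 1 \<Longrightarrow> q u = 0"
  shows "nc_mult q p (d#w) = q [d] * p w"
proof -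
  let ?f = "\<lambda>i. q (take i (d#w)) * p (drop i (d#w))"
  have "nc_mult q p (d#w) = sum ?f {..Suc (length w)}"
    unfolding nc_mult_def by simp
  also have "\<dots> = ?f 1 + sum ?f ({..Suc (length w)} - {1})"
    by (rule sum.remove) auto
  also have "sum ?f ({..Suc (length w)} - {1}) = 0"
  proof (intro sum.neutral ballI)
    fix i assume "i \<in> {..Suc (length w)} - {1}"
    then have "length (take i (d#w)) \<noteq> 1" by auto
    then show "?f i = 0" using assms by simp
  qed
  finally show ?thesis by simp
qed

lemma gen_x_len: "length u \<noteq> 1 \<Longrightarrow> gen_x u = 0" by (auto simp: gen_x_def)
lemma gen_y_len: "length u \<noteq> 1 \<Longrightarrow> gen_y u = 0" by (auto simp: gen_y_def)

lemma rot_inv: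
  assumes "\<And>c v. f (c#v) = f (v@[c])"
  shows "f (rotate k u) = f u"
proof (induction k)
  case 0 then show ?case by simp
next
  case (Suc k)
  have "f (rotate1 x) = f x" for x using assms by (cases x) auto
  then show ?case using Suc by simp
qed

lemma key:
  fixes g :: "'k::field_char_0 ncpoly"
  assumes E: "\<And>c1 c2 v. (if c2 then Dc g (c1#v) else g (c1#v)) = (if c1 then Dc g (v@[c2]) else g (v@[c2]))"
    and j: "j < length w" "w!j" and k: "k < length w" "\<not> w!k"
  shows "g w = 0"
proof -
  have E1: "g (False#v) = g (v@[False])" for v using E[of False False v] by simp
  have E2: "Dc g (False#v) = g (v@[True])" for v using E[of True False v] by simp
  have E3: "g (True#v) = Dc g (v@[False])" for v using E[of False True v] by simp
  have E4: "Dc g (True#v) = Dc g (v@[True])" for v using E[of True True v] by simp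
  have shF: "(\<lambda>u. g (u@[False])) = sh False g" using E1 by (auto simp: sh_def)
  have rotT: "g (True#v) = g (v@[True])" for v
  proof -
    have c0: "Dc g (False#v) = g (True#v) + Dc (sh False g) v"
      using Dc_Cons[of g False v] by (simp only: if_False)
    have a: "g (True#v) + Dc (sh False g) v = g (v@[True])" using E2[of v] c0 by (simp only:)
    have c1: "Dc g (v@[False]) = Dc (sh False g) v + g (v@[True])"
      using Dc_snoc[of g v False] shF by (simp only: if_False)
    have b: "g (True#v) = Dc (sh False g) v + g (v@[True])" using E3[of v] c1 by (simp only:)
    have s1: "Dc (sh False g) v = g (v@[True]) - g (True#v)" using a by (metis add_diff_cancel_left')
    have s2: "Dc (sh False g) v = g (True#v) - g (v@[True])" using b by (metis add_diff_cancel)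
    have "Dc (sh False g) v + Dc (sh False g) v = (g (v@[True]) - g (True#v)) + (g (True#v) - g (v@[True]))"
      by (rule arg_cong2[OF s1 s2])
    then have "Dc (sh False g) v + Dc (sh False g) v = 0" by simp
    then have "2 * Dc (sh False g) v = 0" by (simp only: mult_2)
    then have "Dc (sh False g) v = 0" by simp
    with b show ?thesis by simp
  qed
  have rot: "g (c#v) = g (v@[c])" for c v using E1[of v] rotT[of v] by (cases c) simp_all
  have rotD: "Dc g (c#v) = Dc g (v@[c])" for c v
  proof (cases c)
    case True
    then show ?thesis using E4[of v] by simp
  next
    case False
    have "Dc g (False#v) = Dc g (v@[False])" using E2[of v] E3[of v] rotT[of v] by metis
    then show ?thesis using False by simp
  qed
  have K2: "Dc g u = g (u[i:=True])" if i: "i < length u" "\<not> u!i" for u i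
  proof -
    define v where "v = drop (Suc i) u @ take i u"
    have r1: "rotate i u = False # v"
      using i unfolding v_def by (simp add: rotate_drop_take Cons_nth_drop_Suc[symmetric])
    have r2: "rotate i (u[i:=True]) = True # v"
    proof -
      have "drop i (u[i:=True]) = True # drop (Suc i) u"
        using i by (metis Cons_nth_drop_Suc drop_update_cancel length_list_update lessI nth_list_update_eq)
      then show ?thesis using i unfolding v_def by (simp add: rotate_drop_take)
    qed
    have "Dc g u = Dc g (rotate i u)" using rot_inv[of "Dc g", OF rotD] by simp
    also have "\<dots> = g (v@[True])" using r1 E2 by simp
    also have "\<dots> = g (True#v)" using rotT by simp
    also have "\<dots> = g (rotate i (u[i:=True]))" using r2 by simp
    also have "\<dots> = g (u[i:=True])" using rot_inv[of g, OF rot] by simp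
    finally show ?thesis .
  qed
  define u where "u = w[j:=False]"
  have uj: "\<not> u!j" and uk: "\<not> u!k" and lu: "length u = length w"
    using j k unfolding u_def by (auto simp: nth_list_update)
  have jk: "j \<noteq> k" using j k by auto
  let ?A = "{i. i < length u \<and> \<not> u!i}"
  have "Dc g u = (\<Sum>i<length u. if u!i then 0 else g (u[i:=True]))"
    by (simp add: Dc_def)
  also have "\<dots> = (\<Sum>i<length u. if \<not> u!i then Dc g u else 0)"
  proof (intro sum.cong refl)
    fix i assume "i \<in> {..<length u}"
    then show "(if u!i then 0 else g (u[i:=True])) = (if \<not> u!i then Dc g u else 0)"
      using K2[of i u] by (cases "u!i") simp_all
  qed
  also have "\<dots> = (\<Sum>i\<in>?A. Dc g u)"
    by (subst sum.inter_filter[symmetric]) (auto intro: sum.cong)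
  also have "\<dots> = of_nat (card ?A) * Dc g u" by simp
  finally have eq: "(of_nat (card ?A) - 1) * Dc g u = 0" by (simp add: algebra_simps)
  have "{j,k} \<subseteq> ?A" using uj uk j k lu by auto
  then have "card {j,k} \<le> card ?A" by (intro card_mono) auto
  then have "card ?A \<ge> 2" using jk by simp
  then have "(of_nat (card ?A) :: 'k) \<noteq> 1" by (metis of_nat_eq_1_iff numeral_le_one_iff semiring_norm(69))
  then have "Dc g u = 0" using eq by simp
  moreover have "Dc g u = g (u[j:=True])" using K2[of j u] uj j lu by simp
  moreover have "u[j:=True] = w" unfolding u_def using j list_update_id[of w j] by simp
  ultimately show ?thesis by simp
qed


theorem corollary4p2:
  fixes \<delta> :: "'k::field_char_0 ncpoly \<Rightarrow> 'k ncpoly"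
    and g :: "'k ncpoly"
  assumes "lie_derivation \<delta>"
    and "\<delta> gen_x = nc_zero"
    and "\<delta> gen_y = gen_x"
    and "g \<in> free_lie"
    and "nc_add (lie_bracket g gen_x) (lie_bracket (\<delta> g) gen_y) = nc_zero"
    and "g \<notin> {nc_smult c gen_x | c. True}"
  shows "\<exists>\<alpha> \<beta>. g = nc_add (nc_smult \<alpha> gen_y) (nc_smult \<beta> gen_x) \<and> \<alpha> \<noteq> 0"
proof -
  have dg: "\<delta> g = Dc g" by (rule delta_eq[OF assms(1-4)])
  have H: "nc_add (lie_bracket g gen_x) (lie_bracket (Dc g) gen_y) = nc_zero"
    using assms(5) unfolding dg .
  have E0: "(g (c1#v) * gen_x [c2] - gen_x [c1] * g (v@[c2])) +
            (Dc g (c1#v) * gen_y [c2] - gen_y [c1] * Dc g (v@[c2])) = 0" for c1 c2 v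
  proof -
    have r1: "nc_mult g gen_x (c1 # v @ [c2]) = g (c1#v) * gen_x [c2]"
      using mult_right1[OF gen_x_len, where p=g and w="c1#v" and d=c2] by simp
    have r2: "nc_mult (Dc g) gen_y (c1 # v @ [c2]) = Dc g (c1#v) * gen_y [c2]"
      using mult_right1[OF gen_y_len, where p="Dc g" and w="c1#v" and d=c2] by simp
    have l1: "nc_mult gen_x g (c1 # v @ [c2]) = gen_x [c1] * g (v@[c2])"
      using mult_left1[OF gen_x_len, where p=g and d=c1 and w="v@[c2]"] by simp
    have l2: "nc_mult gen_y (Dc g) (c1 # v @ [c2]) = gen_y [c1] * Dc g (v@[c2])"
      using mult_left1[OF gen_y_len, where p="Dc g" and d=c1 and w="v@[c2]"] by simp
    have "nc_add (lie_bracket g gen_x) (lie_bracket (Dc g) gen_y) (c1 # v @ [c2]) = 0"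
      using H by (simp add: nc_zero_def)
    then show ?thesis unfolding nc_add_def lie_bracket_def r1 r2 l1 l2 .
  qed
  have E: "(if c2 then Dc g (c1#v) else g (c1#v)) = (if c1 then Dc g (v@[c2]) else g (v@[c2]))" for c1 c2 v
    using E0[of c1 v c2] by (cases c1; cases c2) (simp_all add: gen_x_def gen_y_def)
  define \<alpha> where "\<alpha> = g [True]"
  define \<beta> where "\<beta> = g [False]"
  have geq: "g = nc_add (nc_smult \<alpha> gen_y) (nc_smult \<beta> gen_x)"
  proof (rule ext)
    fix w :: "bool list"
    show "g w = nc_add (nc_smult \<alpha> gen_y) (nc_smult \<beta> gen_x) w"
    proof (cases "length w = 1")
      case True
      then obtain c where w: "w = [c]" by (cases w) auto
      then show ?thesis unfolding \<alpha>_def \<beta>_def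
        by (cases c) (simp_all add: nc_add_def nc_smult_def gen_x_def gen_y_def)
    next
      case False
      have rhs: "nc_add (nc_smult \<alpha> gen_y) (nc_smult \<beta> gen_x) w = 0"
        using False by (simp add: nc_add_def nc_smult_def gen_x_len gen_y_len)
      show ?thesis
      proof (cases "(\<exists>j<length w. w!j) \<and> (\<exists>k<length w. \<not> w!k)")
        case True
        then obtain j k where "j < length w" "w!j" "k < length w" "\<not> w!k" by blast
        then have "g w = 0" using key[OF E] by blast
        then show ?thesis using rhs by simp
      next
        case nm: False
        then obtain c where "\<forall>x\<in>set w. x = c"
          by (metis in_set_conv_nth)
        then have "replicate (length w) c = w" by (rule replicate_length_same)
        then have "g w = 0" using lie_rep[OF assms(4) False, of c] by simp
        then show ?thesis using rhs by simp
      qed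
    qed
  qed
  have "\<alpha> \<noteq> 0"
  proof
    assume "\<alpha> = 0"
    then have "g = nc_smult \<beta> gen_x" using geq by (auto simp: nc_add_def nc_smult_def)
    then show False using assms(6) by blast
  qed
  then show ?thesis using geq by blast
qed

end
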